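(* The infinite words $\mathbf{t}_{3/2}$ and $\mathbf{t}'$ are uniformly recurrent.
   Context: Base-$3/2$ expansions: $\langle 0\rangle_{3/2}$ is the empty word, and for $n\ge 1$, writing $2n=3m+d$ with integers $m\ge 0$, $d\in\{0,1,2\}$, one sets $\langle n\rangle_{3/2}=\langle m\rangle_{3/2}\,d$. The Thue--Morse word in base $3/2$ is $\mathbf{t}_{3/2}=(t_n)_{n\ge0}\in\{0,1\}^{\mathbb{N}}$ where $t_n$ is the sum of the digits of $\langle n\rangle_{3/2}$ modulo $2$; equivalently the unique binary sequence with $t_0=0$, $t_{3n}=t_{3n+1}=t_{2n}$, $t_{3n+2}=1-t_{2n+1}$ for all $n\ge 0$. Dekking's word $\mathbf{t}'=(x_n)_{n\ge0}$ is the unique binary infinite word with $x_0=0$ satisfying $\mathbf{t}'=\beta(x_0x_1)\beta(x_2x_3)\beta(x_4x_5)\cdots$, where $\beta(00)=\beta(01)=010$ and $\beta(10)=\beta(11)=101$; it begins $0100101011011010101011011\cdots$. An infinite word is uniformly recurrent if every finite factor of it occurs infinitely often with bounded gaps, i.e. for every factor $u$ there is $L$ such that every factor of length $L$ contains $u$. *)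

theory Defs
  imports Main "HOL-Library.Sublist"
begin

function base32 :: "nat \<Rightarrow> nat list" where
  "base32 n = (if n = 0 then [] else base32 ((2 * n) div 3) @ [(2 * n) mod 3])"
  by pat_completeness auto
termination
  by (relation "measure id") auto

definition t32 :: "nat \<Rightarrow> nat" where
  "t32 n = sum_list (base32 n) mod 2"

definition beta :: "nat \<Rightarrow> nat \<Rightarrow> nat list" where
  "beta a b = (if a = 0 then [0, 1, 0] else [1, 0, 1])"

text \<open>Dekking's word: the unique binary word x with x 0 = 0 and
  x = beta(x0 x1) beta(x2 x3) ..., i.e. the block of positions 3k, 3k+1, 3k+2
  equals beta (x (2k)) (x (2k+1)).\<close>
definition dekking :: "nat \<Rightarrow> nat" where
  "dekking = (THE x. (\<forall>n. x n \<in> {0, 1}) \<and> x 0 = 0 \<and>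
      (\<forall>k j. j < 3 \<longrightarrow> x (3 * k + j) = beta (x (2 * k)) (x (2 * k + 1)) ! j))"

definition factor :: "(nat \<Rightarrow> 'a) \<Rightarrow> nat \<Rightarrow> nat \<Rightarrow> 'a list" where
  "factor x i n = map (\<lambda>j. x (i + j)) [0..<n]"

definition is_factor :: "'a list \<Rightarrow> (nat \<Rightarrow> 'a) \<Rightarrow> bool" where
  "is_factor u x \<longleftrightarrow> (\<exists>i. factor x i (length u) = u)"

definition uniformly_recurrent :: "(nat \<Rightarrow> 'a) \<Rightarrow> bool" where
  "uniformly_recurrent x \<longleftrightarrow>
     (\<forall>u. is_factor u x \<longrightarrow> (\<exists>L. \<forall>k. sublist u (factor x k L)))"

end

theory Submission
  imports Defs
begin

lemma modl: "((a + b + c) mod 2 + d) mod 2 = (a + (b + d) mod 2 + c) mod (2::nat)"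
proof -
  have "((a + b + c) mod 2 + d) mod 2 = (a + b + c + d) mod 2" by (rule mod_add_left_eq)
  also have "\<dots> = ((a + c) + (b + d)) mod 2" by (simp add: ac_simps)
  also have "\<dots> = ((a + c) + (b + d) mod 2) mod 2" by (rule mod_add_right_eq[symmetric])
  also have "\<dots> = (a + (b + d) mod 2 + c) mod 2" by (simp add: ac_simps)
  finally show ?thesis .
qed

locale ratsys =
  fixes f g c :: "nat \<Rightarrow> nat"
  assumes rec: "\<And>n. f n = (f (g n) + c n) mod 2"
    and g3: "\<And>n. g (n + 3) = g n + 2"
    and gdec: "\<And>n. 0 < n \<Longrightarrow> g n < n"
    and g0: "g 0 = 0"
    and c3: "\<And>n. c (n + 3) = c n"
    and f0: "f 0 = 0"
    and one: "\<exists>r. f r = 1"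
begin

lemma fb: "f n < 2"
  by (subst rec) simp

lemma g_add: "g (n + 3 * m) = g n + 2 * m"
proof (induction m)
  case (Suc m)
  have e: "n + 3 * Suc m = (n + 3 * m) + 3" by simp
  show ?case unfolding e g3 Suc.IH by simp
qed simp

lemma c_add: "c (n + 3 * m) = c n"
proof (induction m)
  case (Suc m)
  have e: "n + 3 * Suc m = (n + 3 * m) + 3" by simp
  show ?case unfolding e c3 Suc.IH by simp
qed simp

lemma gs: "(g ^^ Suc k) x = (g ^^ k) (g x)"
  by (metis funpow_Suc_right comp_apply)

lemma gk_add: "(g ^^ k) (n + 3 ^ k * j) = (g ^^ k) n + 2 ^ k * j"
proof (induction k arbitrary: n j)
  case (Suc k)
  have "(g ^^ Suc k) (n + 3 ^ Suc k * j) = (g ^^ k) (g (n + 3 * (3 ^ k * j)))"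
    by (simp only: gs) (simp add: mult.assoc)
  also have "\<dots> = (g ^^ k) (g n + 3 ^ k * (2 * j))"
    by (simp add: g_add mult.left_commute)
  also have "\<dots> = (g ^^ k) (g n) + 2 ^ k * (2 * j)" by (rule Suc)
  also have "\<dots> = (g ^^ Suc k) n + 2 ^ Suc k * j"
    by (simp only: gs) (simp add: mult.left_commute)
  finally show ?case .
qed simp

lemma f_shift: "f (n + 3 ^ k * j) = (f ((g ^^ k) n + 2 ^ k * j) + f n + f ((g ^^ k) n)) mod 2"
proof (induction k arbitrary: n j)
  case 0
  have "f (n + j) < 2" "f n < 2" by (rule fb)+
  then have "f (n + j) = (f (n + j) + f n + f n) mod 2" by (auto simp: less_2_cases_iff)
  then show ?case by simp
next
  case (Suc k)
  have "f (n + 3 ^ Suc k * j) = (f (g (n + 3 * (3 ^ k * j))) + c (n + 3 * (3 ^ k * j))) mod 2"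
    by (subst rec) (simp add: mult.assoc)
  also have "\<dots> = (f (g n + 3 ^ k * (2 * j)) + c n) mod 2"
    by (simp add: g_add c_add mult.left_commute)
  also have "\<dots> = ((f ((g ^^ k) (g n) + 2 ^ k * (2 * j)) + f (g n) + f ((g ^^ k) (g n))) mod 2 + c n) mod 2"
    by (simp only: Suc)
  also have "\<dots> = (f ((g ^^ k) (g n) + 2 ^ k * (2 * j)) + (f (g n) + c n) mod 2 + f ((g ^^ k) (g n))) mod 2"
    by (rule modl)
  also have "\<dots> = (f ((g ^^ k) (g n) + 2 ^ k * (2 * j)) + f n + f ((g ^^ k) (g n))) mod 2"
    by (simp only: rec[of n, symmetric])
  also have "\<dots> = (f ((g ^^ Suc k) n + 2 ^ Suc k * j) + f n + f ((g ^^ Suc k) n)) mod 2"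
    by (simp only: gs) (simp add: ac_simps)
  finally show ?case .
qed

lemma gk_le: "(g ^^ k) n \<le> n - k"
proof (induction k)
  case (Suc k)
  show ?case
  proof (cases "(g ^^ k) n = 0")
    case True
    then show ?thesis by (simp add: g0)
  next
    case False
    then have "g ((g ^^ k) n) < (g ^^ k) n" by (simp add: gdec)
    then show ?thesis using Suc by simp
  qed
qed simp

lemma f_block: "(g ^^ k) r = 0 \<Longrightarrow> f (r + 3 ^ k * j) = (f (2 ^ k * j) + f r) mod 2"
  using f_shift[of r k j] by (simp add: f0)

lemma exists_one: "\<exists>m. f (2 ^ k * m) = 1"
proof -
  obtain r0 where r0: "f r0 = 1" using one by blast
  define K where "K = k + r0 + 1"
  have gK: "(g ^^ K) r0 = 0" using gk_le[of K r0] unfolding K_def by simp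
  have cop: "coprime ((3::nat) ^ K) (2 ^ k)"
    by (simp add: coprime_power_left_iff coprime_power_right_iff)
  have "(3::nat) ^ K \<noteq> 0" by simp
  then obtain x y where xy: "(3::nat) ^ K * x = 2 ^ k * y + gcd (3 ^ K) (2 ^ k)"
    using bezout_nat by blast
  then have xy1: "(3::nat) ^ K * x = 2 ^ k * y + 1" using cop by simp
  obtain E where E: "(2::nat) ^ k = Suc E"
    by (metis not0_implies_Suc power_not_zero zero_neq_numeral)
  define j where "j = x * E * r0"
  have "3 ^ K * j = (3 ^ K * x) * E * r0" unfolding j_def by (simp only: mult.assoc)
  then have "3 ^ K * j + r0 = (2 ^ k * y + 1) * E * r0 + r0" by (simp only: xy1)
  also have "\<dots> = 2 ^ k * (y * E * r0 + r0)"
    unfolding E by (simp add: algebra_simps)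
  finally have dv: "3 ^ K * j + r0 = 2 ^ k * (y * E * r0 + r0)" .
  show ?thesis
  proof (cases "f (2 ^ K * j) = 1")
    case True
    have eq2: "(2::nat) ^ K * j = 2 ^ k * (2 ^ (r0 + 1) * j)"
      unfolding K_def by (simp add: power_add algebra_simps)
    have "f (2 ^ k * (2 ^ (r0 + 1) * j)) = 1" using True by (simp only: eq2[symmetric])
    then show ?thesis by blast
  next
    case False
    then have "f (2 ^ K * j) = 0" using fb[of "2 ^ K * j"] by simp
    then have "f (r0 + 3 ^ K * j) = 1" using f_block[OF gK, of j] r0 by simp
    moreover have "r0 + 3 ^ K * j = 2 ^ k * (y * E * r0 + r0)" using dv by simp
    ultimately have "f (2 ^ k * (y * E * r0 + r0)) = 1" by simp
    then show ?thesis by blast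
  qed
qed

lemma reach0: "\<forall>r<R. (g ^^ R) r = 0"
proof (intro allI impI)
  fix r assume "r < R"
  then have "r - R = 0" by simp
  then show "(g ^^ R) r = 0" using gk_le[of R r] by simp
qed

lemma compl: "\<exists>i'. \<forall>r<l. f (i' + r) = 1 - f (i + r)"
proof -
  define K where "K = i + l"
  obtain m where m: "f (2 ^ K * m) = 1" using exists_one by blast
  show ?thesis
  proof (intro exI allI impI)
    fix r assume "r < l"
    then have "(g ^^ K) (i + r) = 0" using reach0 unfolding K_def by simp
    then have "f ((i + r) + 3 ^ K * m) = (1 + f (i + r)) mod 2" using f_block m by simp
    moreover have "f (i + r) < 2" by (rule fb)
    ultimately have "f ((i + r) + 3 ^ K * m) = 1 - f (i + r)"
      by (auto simp: less_2_cases_iff)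
    moreover have e: "i + 3 ^ K * m + r = (i + r) + 3 ^ K * m" by simp
    ultimately show "f (i + 3 ^ K * m + r) = 1 - f (i + r)" by (simp only: e)
  qed
qed

lemma main: "\<exists>L. \<forall>p. \<exists>q. p \<le> q \<and> q + l \<le> p + L \<and> (\<forall>r<l. f (q + r) = f (i + r))"
proof -
  obtain i' where i': "\<forall>r<l. f (i' + r) = 1 - f (i + r)" using compl by blast
  define K where "K = i + i' + l"
  have z1: "(g ^^ K) (i + r) = 0" if "r < l" for r using reach0 that unfolding K_def by simp
  have z2: "(g ^^ K) (i' + r) = 0" if "r < l" for r using reach0 that unfolding K_def by simp
  show ?thesis
  proof (rule exI[of _ "3 ^ K + i + i' + l"], rule allI)
    fix p :: nat
    define j where "j = p div 3 ^ K + 1"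
    have pm: "p mod 3 ^ K < 3 ^ K" by simp
    have "p < (p div 3 ^ K) * 3 ^ K + 3 ^ K" using div_mult_mod_eq[of p "3 ^ K"] pm by linarith
    then have "p < 3 ^ K * j" unfolding j_def by (simp add: algebra_simps)
    moreover have "3 ^ K * j \<le> p + 3 ^ K" unfolding j_def
      by (simp add: algebra_simps)
    ultimately have A: "p \<le> 3 ^ K * j" "3 ^ K * j \<le> p + 3 ^ K" by auto
    show "\<exists>q. p \<le> q \<and> q + l \<le> p + (3 ^ K + i + i' + l) \<and> (\<forall>r<l. f (q + r) = f (i + r))"
    proof (cases "f (2 ^ K * j) = 0")
      case True
      show ?thesis
      proof (intro exI[of _ "3 ^ K * j + i"] conjI allI impI)
        fix r assume "r < l"
        have "f ((i + r) + 3 ^ K * j) = f (i + r)"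
          using f_block[OF z1[OF \<open>r < l\<close>], of j] True fb[of "i + r"] by simp
        moreover have e: "3 ^ K * j + i + r = (i + r) + 3 ^ K * j" by simp
        ultimately show "f (3 ^ K * j + i + r) = f (i + r)" by (simp only: e)
      qed (use A in auto)
    next
      case False
      then have T: "f (2 ^ K * j) = 1" using fb[of "2 ^ K * j"] by simp
      show ?thesis
      proof (intro exI[of _ "3 ^ K * j + i'"] conjI allI impI)
        fix r assume "r < l"
        have "f ((i' + r) + 3 ^ K * j) = (1 + f (i' + r)) mod 2"
          using f_block[OF z2[OF \<open>r < l\<close>], of j] T by simp
        moreover have "f (i' + r) = 1 - f (i + r)" using i' \<open>r < l\<close> by simp
        moreover have "f (i + r) < 2" by (rule fb)
        ultimately have "f ((i' + r) + 3 ^ K * j) = f (i + r)"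
          by (auto simp: less_2_cases_iff)
        moreover have e: "3 ^ K * j + i' + r = (i' + r) + 3 ^ K * j" by simp
        ultimately show "f (3 ^ K * j + i' + r) = f (i + r)" by (simp only: e)
      qed (use A in auto)
    qed
  qed
qed

lemma factor_append: "factor x p (a + b) = factor x p a @ factor x (p + a) b"
  unfolding factor_def by (induction b) (auto simp: add.assoc)

lemma ur: "uniformly_recurrent f"
  unfolding uniformly_recurrent_def is_factor_def
proof (intro allI impI)
  fix u assume "\<exists>i. factor f i (length u) = u"
  then obtain i where u: "factor f i (length u) = u" by blast
  obtain L where L: "\<forall>p. \<exists>q. p \<le> q \<and> q + length u \<le> p + L \<and> (\<forall>r<length u. f (q + r) = f (i + r))"
    using main by blast
  show "\<exists>L. \<forall>k. sublist u (factor f k L)"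
  proof (rule exI[of _ L], rule allI)
    fix p :: nat
    obtain q where q: "p \<le> q" "q + length u \<le> p + L" "\<forall>r<length u. f (q + r) = f (i + r)"
      using L by blast
    have "factor f q (length u) = factor f i (length u)"
      unfolding factor_def using q(3) by (intro map_cong) auto
    then have fq: "factor f q (length u) = u" using u by simp
    define a where "a = q - p"
    define c where "c = L - a - length u"
    have pa: "p + a = q" unfolding a_def using q by simp
    have La: "L = a + (length u + c)" unfolding a_def c_def using q by simp
    have "factor f p L = factor f p a @ factor f (p + a) (length u + c)"
      unfolding La by (rule factor_append)
    also have "factor f (p + a) (length u + c) = factor f q (length u) @ factor f (q + length u) c"
      unfolding pa by (rule factor_append)
    finally have "factor f p L = factor f p a @ u @ factor f (q + length u) c" using fq by simp
    then show "sublist u (factor f p L)" unfolding sublist_def by blast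
  qed
qed

end

lemma t32_rec: "t32 n = (t32 (2 * n div 3) + 2 * n mod 3) mod 2"
proof (cases "n = 0")
  case True
  then show ?thesis by (simp add: t32_def)
next
  case False
  then have "base32 n = base32 (2 * n div 3) @ [2 * n mod 3]"
    by (subst base32.simps[of n]) (simp del: base32.simps)
  then show ?thesis unfolding t32_def by (simp del: base32.simps add: mod_add_left_eq)
qed

lemma t32_2: "t32 2 = 1"
  by (simp add: t32_def)

interpretation T: ratsys t32 "\<lambda>n. 2 * n div 3" "\<lambda>n. 2 * n mod 3"
proof
  show "t32 n = (t32 (2 * n div 3) + 2 * n mod 3) mod 2" for n by (rule t32_rec)
  show "2 * (n + 3) div 3 = 2 * n div 3 + 2" for n :: nat by simp
  show "0 < n \<Longrightarrow> 2 * n div 3 < n" for n :: nat by simp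
  show "2 * 0 div 3 = (0::nat)" by simp
  show "2 * (n + 3) mod 3 = 2 * n mod 3" for n :: nat by presburger
  show "t32 0 = 0" by (simp add: t32_def)
  show "\<exists>r. t32 r = 1" using t32_2 by blast
qed

function dk :: "nat \<Rightarrow> nat" where
  "dk n = (if n = 0 then 0 else (dk (2 * (n div 3)) + (if n mod 3 = 1 then 1 else 0)) mod 2)"
  by pat_completeness auto
termination
  by (relation "measure id") auto

declare dk.simps[simp del]

lemma dk_rec: "dk n = (dk (2 * (n div 3)) + (if n mod 3 = 1 then 1 else 0)) mod 2"
  by (cases "n = 0") (simp_all add: dk.simps[of n] dk.simps[of 0])

lemma dk_lt: "dk n < 2"
  by (subst dk_rec) simp

lemma dekking_eq: "dekking = dk"
  unfolding dekking_def
proof (rule the_equality)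
  show "(\<forall>n. dk n \<in> {0, 1}) \<and> dk 0 = 0 \<and>
      (\<forall>k j. j < 3 \<longrightarrow> dk (3 * k + j) = beta (dk (2 * k)) (dk (2 * k + 1)) ! j)"
  proof (intro conjI allI impI)
    fix n show "dk n \<in> {0, 1}" using dk_lt[of n] by (auto simp: less_2_cases_iff)
  next
    show "dk 0 = 0" by (simp add: dk.simps[of 0])
  next
    fix k j :: nat assume j: "j < 3"
    have "dk (3 * k + j) = (dk (2 * k) + (if j = 1 then 1 else 0)) mod 2"
      using j by (subst dk_rec) simp
    moreover have "dk (2 * k) < 2" by (rule dk_lt)
    ultimately show "dk (3 * k + j) = beta (dk (2 * k)) (dk (2 * k + 1)) ! j"
      using j unfolding beta_def
      by (auto simp: less_2_cases_iff numeral_3_eq_3 less_Suc_eq)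
  qed
next
  fix x assume P: "(\<forall>n. x n \<in> {0, 1}) \<and> x 0 = 0 \<and>
      (\<forall>k j. j < 3 \<longrightarrow> x (3 * k + j) = beta (x (2 * k)) (x (2 * k + 1)) ! j)"
  have "x n = dk n" for n
  proof (induction n rule: less_induct)
    case (less n)
    show ?case
    proof (cases "n = 0")
      case True
      then show ?thesis using P by (simp add: dk.simps[of 0])
    next
      case False
      define k where "k = n div 3"
      define j where "j = n mod 3"
      have n: "n = 3 * k + j" unfolding k_def j_def by simp
      have j: "j < 3" unfolding j_def by simp
      have "2 * k < n" using False unfolding k_def by simp
      then have ih: "x (2 * k) = dk (2 * k)" by (rule less)
      have xn: "x n = beta (x (2 * k)) (x (2 * k + 1)) ! j" using P j n by blast
      have dn: "dk n = (dk (2 * k) + (if j = 1 then 1 else 0)) mod 2"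
        unfolding k_def j_def by (rule dk_rec)
      have "dk (2 * k) < 2" by (rule dk_lt)
      then show ?thesis using xn dn ih j unfolding beta_def
        by (auto simp: less_2_cases_iff numeral_3_eq_3 less_Suc_eq)
    qed
  qed
  then show "x = dk" by blast
qed

interpretation D: ratsys dk "\<lambda>n. 2 * (n div 3)" "\<lambda>n. if n mod 3 = 1 then 1 else 0"
proof
  show "dk n = (dk (2 * (n div 3)) + (if n mod 3 = 1 then 1 else 0)) mod 2" for n by (rule dk_rec)
  show "2 * ((n + 3) div 3) = 2 * (n div 3) + 2" for n :: nat by presburger
  show "0 < n \<Longrightarrow> 2 * (n div 3) < n" for n :: nat by simp
  show "2 * (0 div 3) = (0::nat)" by simp
  show "(if (n + 3) mod 3 = 1 then 1 else 0) = (if n mod 3 = 1 then 1 else (0::nat))" for n :: nat by simp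
  show "dk 0 = 0" by (simp add: dk.simps[of 0])
  have "dk 1 = 1" using dk_rec[of 1] by (simp add: dk.simps[of 0])
  then show "\<exists>r. dk r = 1" by blast
qed

theorem corollary13:
  shows "uniformly_recurrent t32 \<and> uniformly_recurrent dekking"
  using T.ur D.ur dekking_eq by simp

end
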